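(* Let $F$ be a non-archimedean local field of characteristic not $2$ with valuation ring $\mathfrak{o}$, $V$ a $2$-dimensional $F$-vector space, and $\ddagger$ an orthogonal involution on $End(V)$ with associated bilinear form $b_\ddagger$. For a lattice $\Lambda\subset V$, the order $End(\Lambda)\cap End(\Lambda^\sharp)$ depends only on $\Lambda$ up to scaling by $F^\times$, so that $$[\Lambda]\mapsto End(\Lambda)\cap End(\Lambda^\sharp)$$ is a well-defined map from lattices in $V$ up to scaling to orders of $End(V)$; its image is exactly the set of orders of the form $\mathcal{O}\cap\mathcal{O}^\ddagger$ with $\mathcal{O}$ a maximal order of $End(V)$.
   Context: $b_\ddagger$ is a nondegenerate symmetric bilinear form on $V$ (unique up to $F^\times$-scaling) with $b_\ddagger(v,\sigma w)=b_\ddagger(\sigma^\ddagger v,w)$ for all $v,w\in V,\sigma\in End(V)$. A lattice in $V$ is a finitely generated $\mathfrak{o}$-submodule spanning $V$. $\Lambda^\sharp=\{v\in V: b_\ddagger(v,\Lambda)\subset\mathfrak{o}\}$ and $End(\Lambda)=\{\sigma\in End(V):\sigma(\Lambda)\subset\Lambda\}$. An order is an $\mathfrak{o}$-lattice in $End(V)$ which is a subring with $1$ spanning $End(V)$; $\mathcal{O}^\ddagger=\{x^\ddagger : x\in\mathcal{O}\}$. *)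

theory Defs
  imports "HOL-Analysis.Analysis"
begin

(* A discrete (normalized, surjective onto Z) valuation on a field; v 0 is irrelevant. *)
definition discrete_valuation :: "('a::field \<Rightarrow> int) \<Rightarrow> bool" where
  "discrete_valuation v \<longleftrightarrow>
     (\<forall>x y. x \<noteq> 0 \<longrightarrow> y \<noteq> 0 \<longrightarrow> v (x * y) = v x + v y) \<and>
     (\<forall>x y. x \<noteq> 0 \<longrightarrow> y \<noteq> 0 \<longrightarrow> x + y \<noteq> 0 \<longrightarrow> v (x + y) \<ge> min (v x) (v y)) \<and>
     (\<forall>n. \<exists>x. x \<noteq> 0 \<and> v x = n)"

definition val_ring :: "('a::field \<Rightarrow> int) \<Rightarrow> 'a set" where
  "val_ring v = {x. x = 0 \<or> v x \<ge> 0}"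

definition val_ideal :: "('a::field \<Rightarrow> int) \<Rightarrow> 'a set" where
  "val_ideal v = {x. x = 0 \<or> v x \<ge> 1}"

definition val_complete :: "('a::field \<Rightarrow> int) \<Rightarrow> bool" where
  "val_complete v \<longleftrightarrow>
     (\<forall>X :: nat \<Rightarrow> 'a.
        (\<forall>N::int. \<exists>M. \<forall>m\<ge>M. \<forall>n\<ge>M. X m - X n = 0 \<or> v (X m - X n) \<ge> N) \<longrightarrow>
        (\<exists>L. \<forall>N::int. \<exists>M. \<forall>n\<ge>M. X n - L = 0 \<or> v (X n - L) \<ge> N))"

(* residue field o/p is finite: finitely many cosets of p in o *)
definition finite_residue_field :: "('a::field \<Rightarrow> int) \<Rightarrow> bool" where
  "finite_residue_field v \<longleftrightarrow>
     (\<exists>S. finite S \<and> S \<subseteq> val_ring v \<and> (\<forall>x\<in>val_ring v. \<exists>s\<in>S. x - s \<in> val_ideal v))"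

definition nonarch_local_field :: "('a::field \<Rightarrow> int) \<Rightarrow> bool" where
  "nonarch_local_field v \<longleftrightarrow> discrete_valuation v \<and> val_complete v \<and> finite_residue_field v"

definition o_lattice :: "('a::field \<Rightarrow> int) \<Rightarrow> ('a \<Rightarrow> 'v::ab_group_add \<Rightarrow> 'v) \<Rightarrow> 'v set \<Rightarrow> bool" where
  "o_lattice v sm L \<longleftrightarrow>
     (\<exists>S. finite S \<and> L = {(\<Sum>s\<in>S. sm (c s) s) | c. \<forall>s\<in>S. c s \<in> val_ring v}) \<and>
     (\<forall>x. \<exists>S c. finite S \<and> S \<subseteq> L \<and> x = (\<Sum>s\<in>S. sm (c s) s))"

(* V = F^2, End(V) = 2x2 matrices over F *)
definition mat_smult :: "'a::times \<Rightarrow> 'a^2^2 \<Rightarrow> 'a^2^2" where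
  "mat_smult c A = (\<chi> i j. c * A $ i $ j)"

definition lattice :: "('a::field \<Rightarrow> int) \<Rightarrow> ('a^2) set \<Rightarrow> bool" where
  "lattice v L \<longleftrightarrow> o_lattice v (*s) L"

definition dual_lattice :: "('a::field \<Rightarrow> int) \<Rightarrow> ('a^2 \<Rightarrow> 'a^2 \<Rightarrow> 'a) \<Rightarrow> ('a^2) set \<Rightarrow> ('a^2) set" where
  "dual_lattice v b L = {x. \<forall>y\<in>L. b x y \<in> val_ring v}"

definition End_lat :: "('a::field^2) set \<Rightarrow> ('a^2^2) set" where
  "End_lat L = {\<sigma>. \<forall>x\<in>L. \<sigma> *v x \<in> L}"

definition is_order :: "('a::field \<Rightarrow> int) \<Rightarrow> ('a^2^2) set \<Rightarrow> bool" where
  "is_order v R \<longleftrightarrow> o_lattice v mat_smult R \<and> mat 1 \<in> R \<and> (\<forall>x\<in>R. \<forall>y\<in>R. x ** y \<in> R)"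

definition maximal_order :: "('a::field \<Rightarrow> int) \<Rightarrow> ('a^2^2) set \<Rightarrow> bool" where
  "maximal_order v R \<longleftrightarrow> is_order v R \<and> (\<forall>R'. is_order v R' \<longrightarrow> R \<subseteq> R' \<longrightarrow> R' = R)"

definition sym_nondeg_bilinear :: "('a::field^2 \<Rightarrow> 'a^2 \<Rightarrow> 'a) \<Rightarrow> bool" where
  "sym_nondeg_bilinear b \<longleftrightarrow>
     (\<forall>x y z. b (x + y) z = b x z + b y z) \<and>
     (\<forall>c x y. b (c *s x) y = c * b x y) \<and>
     (\<forall>x y. b x y = b y x) \<and>
     (\<forall>x. (\<forall>y. b x y = 0) \<longrightarrow> x = 0)"

(* involution of the first kind on End(V): F-linear anti-automorphism of order 2 *)
definition involution :: "('a::field^2^2 \<Rightarrow> 'a^2^2) \<Rightarrow> bool" where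
  "involution \<iota> \<longleftrightarrow>
     (\<forall>A B. \<iota> (A + B) = \<iota> A + \<iota> B) \<and>
     (\<forall>c A. \<iota> (mat_smult c A) = mat_smult c (\<iota> A)) \<and>
     (\<forall>A B. \<iota> (A ** B) = \<iota> B ** \<iota> A) \<and>
     (\<forall>A. \<iota> (\<iota> A) = A)"

(* b is the bilinear form associated with \<iota>: b(v, \<sigma> w) = b(\<iota> \<sigma> v, w); b symmetric means \<iota> is orthogonal *)
definition adjoint_form :: "('a::field^2^2 \<Rightarrow> 'a^2^2) \<Rightarrow> ('a^2 \<Rightarrow> 'a^2 \<Rightarrow> 'a) \<Rightarrow> bool" where
  "adjoint_form \<iota> b \<longleftrightarrow> (\<forall>x w \<sigma>. b x (\<sigma> *v w) = b (\<iota> \<sigma> *v x) w)"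

end

theory Submission
  imports Defs
begin
definition pv :: "('a::field \<Rightarrow> int) \<Rightarrow> int \<Rightarrow> 'a set" where
  "pv v n = {x. x = 0 \<or> v x \<ge> n}"

lemma ex_min_int:
  fixes f :: "'b \<Rightarrow> int"
  assumes "X \<noteq> {}" "\<forall>x\<in>X. f x \<ge> B"
  shows "\<exists>x\<in>X. \<forall>y\<in>X. f x \<le> f y"
proof -
  obtain x0 where x0: "x0 \<in> X" using assms by auto
  from ex_has_least_nat[of "\<lambda>y. y \<in> X" x0 "\<lambda>y. nat (f y - B)"] x0
  obtain x where "x \<in> X" "\<forall>y. y \<in> X \<longrightarrow> nat (f x - B) \<le> nat (f y - B)" by blast
  then have x: "x \<in> X" "\<And>y. y \<in> X \<Longrightarrow> nat (f x - B) \<le> nat (f y - B)" by auto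
  have "f x \<le> f y" if y: "y \<in> X" for y
  proof -
    have "int (nat (f x - B)) \<le> int (nat (f y - B))" using x(2)[OF y] by (simp only: of_nat_le_iff)
    moreover have "f x - B \<ge> 0" "f y - B \<ge> 0" using assms(2) x(1) y by auto
    ultimately show ?thesis by simp
  qed
  then show ?thesis using x(1) by blast
qed

locale dval = fixes v :: "'a::field \<Rightarrow> int" assumes dv: "discrete_valuation v"
begin

lemma v_mult: "x \<noteq> 0 \<Longrightarrow> y \<noteq> 0 \<Longrightarrow> v (x * y) = v x + v y"
  using dv unfolding discrete_valuation_def by blast

lemma v_add: "x \<noteq> 0 \<Longrightarrow> y \<noteq> 0 \<Longrightarrow> x + y \<noteq> 0 \<Longrightarrow> v (x + y) \<ge> min (v x) (v y)"
  using dv unfolding discrete_valuation_def by blast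

lemma v_surj: "\<exists>t. t \<noteq> 0 \<and> v t = n"
  using dv unfolding discrete_valuation_def by blast

lemma v_one: "v 1 = 0"
  using v_mult[of 1 1] by simp

lemma v_inv: "x \<noteq> 0 \<Longrightarrow> v (inverse x) = - v x"
  using v_mult[of x "inverse x"] v_one by simp

lemma v_neg1: "v (-1) = 0"
  using v_mult[of "-1" "-1"] v_one by simp

lemma v_uminus: "v (- x) = v x"
proof (cases "x = 0")
  case False then show ?thesis using v_mult[of "-1" x] v_neg1 by simp
qed simp

lemma v_power: "x \<noteq> 0 \<Longrightarrow> v (x ^ n) = int n * v x"
  by (induction n) (auto simp: v_one v_mult algebra_simps)

lemma pv_0[simp]: "0 \<in> pv v n" by (simp add: pv_def)

lemma pv_add: "a \<in> pv v n \<Longrightarrow> b \<in> pv v n \<Longrightarrow> a + b \<in> pv v n"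
  unfolding pv_def using v_add[of a b] by fastforce

lemma pv_uminus: "a \<in> pv v n \<Longrightarrow> - a \<in> pv v n"
  unfolding pv_def using v_uminus[of a] by auto

lemma pv_diff: "a \<in> pv v n \<Longrightarrow> b \<in> pv v n \<Longrightarrow> a - b \<in> pv v n"
  using pv_add[of a n "-b"] pv_uminus[of b n] by simp

lemma pv_mult:
  assumes a: "a \<in> pv v n" and b: "b \<in> pv v m" shows "a * b \<in> pv v (n + m)"
proof (cases "a = 0 \<or> b = 0")
  case True then show ?thesis by (auto simp: pv_def)
next
  case False
  then have "v (a * b) = v a + v b" by (intro v_mult) auto
  moreover have "v a \<ge> n" "v b \<ge> m" using a b False by (auto simp: pv_def)
  ultimately have "v (a * b) \<ge> n + m" by linarith
  then show ?thesis by (simp add: pv_def)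
qed

lemma pv_mono: "a \<in> pv v n \<Longrightarrow> m \<le> n \<Longrightarrow> a \<in> pv v m"
  unfolding pv_def by auto

lemma pv_one: "1 \<in> pv v 0" unfolding pv_def using v_one by simp

lemma pv_v: "a \<in> pv v (v a)" unfolding pv_def by simp

lemma val_ring_pv: "val_ring v = pv v 0"
  unfolding val_ring_def pv_def by auto

lemma pv_divide: "a \<in> pv v n \<Longrightarrow> t \<noteq> 0 \<Longrightarrow> a / t \<in> pv v (n - v t)"
proof -
  assume a: "a \<in> pv v n" and t: "t \<noteq> 0"
  have "inverse t \<in> pv v (- v t)" using v_inv[OF t] by (simp add: pv_def)
  from pv_mult[OF a this] show ?thesis by (simp add: divide_inverse)
qed

lemma pv_sum: "finite S \<Longrightarrow> (\<And>s. s \<in> S \<Longrightarrow> f s \<in> pv v n) \<Longrightarrow> sum f S \<in> pv v n"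
  by (induction S rule: finite_induct) (auto intro: pv_add)

lemma pv_bound_finite: "finite I \<Longrightarrow> \<exists>B. \<forall>i\<in>I. f i \<in> pv v B"
proof (induction I rule: finite_induct)
  case empty then show ?case by auto
next
  case (insert x F)
  then obtain B where B: "\<forall>i\<in>F. f i \<in> pv v B" by auto
  have "f x \<in> pv v (v (f x))" by (rule pv_v)
  then show ?case using B
    by (intro exI[of _ "min B (v (f x))"]) (auto intro: pv_mono)
qed

lemma pv_power_unbounded:
  assumes "c \<noteq> 0" "v c < 0"
  shows "\<exists>n. c ^ n \<notin> pv v N"
proof -
  define k where "k = nat (\<bar>N\<bar> + 1)"
  have n: "int k = \<bar>N\<bar> + 1" unfolding k_def by simp
  have e: "v (c ^ k) = int k * v c" using v_power assms by blast
  have "int k * v c \<le> int k * (-1)" using assms(2) by (intro mult_left_mono) linarith+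
  then have "v (c ^ k) < N" unfolding e using n by linarith
  moreover have "c ^ k \<noteq> 0" using assms(1) by simp
  ultimately have "c ^ k \<notin> pv v N" unfolding pv_def by simp
  then show ?thesis by (rule exI)
qed

end

definition csys :: "('a::field \<Rightarrow> 'v::ab_group_add \<Rightarrow> 'v) \<Rightarrow> ('v \<Rightarrow> 'i::finite \<Rightarrow> 'a) \<Rightarrow> bool" where
  "csys sm co \<longleftrightarrow> (\<forall>x y i. co (x + y) i = co x i + co y i) \<and> (\<forall>c x i. co (sm c x) i = c * co x i)
      \<and> (\<forall>x y. (\<forall>i. co x i = co y i) \<longrightarrow> x = y)"

definition osub :: "('a::field \<Rightarrow> int) \<Rightarrow> ('a \<Rightarrow> 'v::ab_group_add \<Rightarrow> 'v) \<Rightarrow> 'v set \<Rightarrow> bool" where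
  "osub v sm N \<longleftrightarrow> 0 \<in> N \<and> (\<forall>x\<in>N. \<forall>y\<in>N. x + y \<in> N) \<and> (\<forall>c\<in>pv v 0. \<forall>x\<in>N. sm c x \<in> N)"

definition ospan :: "('a::field \<Rightarrow> int) \<Rightarrow> ('a \<Rightarrow> 'v::ab_group_add \<Rightarrow> 'v) \<Rightarrow> 'v set \<Rightarrow> 'v set" where
  "ospan v sm S = {(\<Sum>s\<in>S. sm (c s) s) | c. \<forall>s\<in>S. c s \<in> val_ring v}"

definition cbnd :: "('a::field \<Rightarrow> int) \<Rightarrow> ('v \<Rightarrow> 'i \<Rightarrow> 'a) \<Rightarrow> 'v set \<Rightarrow> int \<Rightarrow> bool" where
  "cbnd v co N B \<longleftrightarrow> (\<forall>x\<in>N. \<forall>i. co x i \<in> pv v B)"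

lemma ospanI: "x = (\<Sum>s\<in>S. sm (c s) s) \<Longrightarrow> (\<forall>s\<in>S. c s \<in> val_ring v) \<Longrightarrow> x \<in> ospan v sm S"
  unfolding ospan_def mem_Collect_eq by (intro exI[of _ c]) simp

lemma osub_sum:
  assumes N: "osub v sm N" and T: "finite T" "\<And>t. t \<in> T \<Longrightarrow> f t \<in> N" shows "sum f T \<in> N"
  using T
proof (induction T rule: finite_induct)
  case empty show ?case using N by (simp add: osub_def)
next
  case (insert x F) then show ?case using N by (simp add: osub_def)
qed

context dval begin
context fixes sm :: "'a::field \<Rightarrow> 'v::ab_group_add \<Rightarrow> 'v" and co :: "'v \<Rightarrow> 'i::finite \<Rightarrow> 'a"
  assumes cs: "csys sm co"
begin

lemma co_add: "co (x + y) i = co x i + co y i" using cs unfolding csys_def by blast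
lemma co_sm: "co (sm c x) i = c * co x i" using cs unfolding csys_def by blast
lemma co_eq: "(\<And>i. co x i = co y i) \<Longrightarrow> x = y" using cs unfolding csys_def by blast
lemma co_0: "co 0 i = 0"
proof -
  have h: "co 0 i + 0 = co 0 i + co 0 i" using co_add[of 0 0 i] by simp
  show ?thesis using add_left_cancel[THEN iffD1, OF h] by simp
qed
lemma co_neg: "co (- x) i = - co x i" using co_add[of x "-x" i] co_0[of i] by (simp add: eq_neg_iff_add_eq_0 add.commute)
lemma co_diff: "co (x - y) i = co x i - co y i" using co_add[of x "-y" i] co_neg[of y i] by simp
lemma co_sum: "co (sum f S) i = (\<Sum>s\<in>S. co (f s) i)"
  by (induction S rule: infinite_finite_induct) (auto simp: co_0 co_add)

lemma sm_0: "sm 0 x = 0" by (rule co_eq) (simp add: co_sm co_0)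
lemma sm_1: "sm 1 x = x" by (rule co_eq) (simp add: co_sm)

lemma ospan_sub: "finite S \<Longrightarrow> S \<subseteq> ospan v sm S"
proof
  fix s assume S: "finite S" and s: "s \<in> S"
  let ?c = "\<lambda>t. if t = s then (1::'a) else 0"
  have "(\<Sum>t\<in>S. sm (?c t) t) = sm 1 s + (\<Sum>t\<in>S - {s}. sm (?c t) t)"
    using S s by (simp add: sum.remove)
  also have "(\<Sum>t\<in>S - {s}. sm (?c t) t) = 0" by (intro sum.neutral) (auto simp: sm_0)
  finally have "s = (\<Sum>t\<in>S. sm (?c t) t)" by (simp add: sm_1)
  moreover have "\<forall>t\<in>S. ?c t \<in> val_ring v" by (auto simp: val_ring_def v_one)
  ultimately show "s \<in> ospan v sm S" by (rule ospanI)
qed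

lemma osub_ospan: assumes S: "finite S" shows "osub v sm (ospan v sm S)"
  unfolding osub_def
proof (intro conjI ballI)
  have "(0::'v) = (\<Sum>s\<in>S. sm 0 s)" by (simp add: sm_0)
  then show "0 \<in> ospan v sm S" by (rule ospanI) (auto simp: val_ring_def)
next
  fix x y assume "x \<in> ospan v sm S" "y \<in> ospan v sm S"
  then obtain c d where x: "x = (\<Sum>s\<in>S. sm (c s) s)" "\<forall>s\<in>S. c s \<in> val_ring v"
    and y: "y = (\<Sum>s\<in>S. sm (d s) s)" "\<forall>s\<in>S. d s \<in> val_ring v" unfolding ospan_def by blast
  have "x + y = (\<Sum>s\<in>S. sm (c s + d s) s)"
    by (rule co_eq) (simp add: x y co_add co_sum co_sm algebra_simps sum.distrib)
  moreover have "\<forall>s\<in>S. c s + d s \<in> val_ring v" using x y by (auto simp: val_ring_pv intro: pv_add)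
  ultimately show "x + y \<in> ospan v sm S" by (rule ospanI)
next
  fix a x assume a: "a \<in> pv v 0" and "x \<in> ospan v sm S"
  then obtain c where x: "x = (\<Sum>s\<in>S. sm (c s) s)" "\<forall>s\<in>S. c s \<in> val_ring v" unfolding ospan_def by blast
  have "sm a x = (\<Sum>s\<in>S. sm (a * c s) s)"
    by (rule co_eq) (simp add: x co_sum co_sm sum_distrib_left algebra_simps)
  moreover have "\<forall>s\<in>S. a * c s \<in> val_ring v" using x a pv_mult[of a 0 _ 0] by (auto simp: val_ring_pv)
  ultimately show "sm a x \<in> ospan v sm S" by (rule ospanI)
qed


lemma ospan_le: assumes "osub v sm N" "S \<subseteq> N" "finite S" shows "ospan v sm S \<subseteq> N"
proof
  fix x assume "x \<in> ospan v sm S"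
  then obtain c where x: "x = (\<Sum>s\<in>S. sm (c s) s)" "\<forall>s\<in>S. c s \<in> val_ring v" unfolding ospan_def by blast
  show "x \<in> N" unfolding x(1) using assms x(2) by (intro osub_sum[of v sm]) (auto simp: osub_def val_ring_pv)
qed

lemma ospan_bnd: assumes S: "finite S" shows "\<exists>B. cbnd v co (ospan v sm S) B"
proof -
  obtain B where B: "\<forall>p\<in>S \<times> UNIV. (\<lambda>(s,i). co s i) p \<in> pv v B"
    using pv_bound_finite[of "S \<times> (UNIV::'i set)" "\<lambda>(s,i). co s i"] S by auto
  have "co x i \<in> pv v B" if xS: "x \<in> ospan v sm S" for x i
  proof -
    obtain c where x: "x = (\<Sum>s\<in>S. sm (c s) s)" "\<forall>s\<in>S. c s \<in> val_ring v"
      using xS unfolding ospan_def by blast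
    have "co x i = (\<Sum>s\<in>S. c s * co s i)" by (simp add: x co_sum co_sm)
    also have "\<dots> \<in> pv v B" using S
    proof (rule pv_sum)
      fix s assume "s \<in> S"
      then have "c s \<in> pv v 0" "co s i \<in> pv v B" using x B by (auto simp: val_ring_pv)
      then show "c s * co s i \<in> pv v B" using pv_mult[of "c s" 0 "co s i" B] by simp
    qed
    finally show ?thesis .
  qed
  then show ?thesis unfolding cbnd_def by blast
qed

lemma fg_aux:
  assumes "finite J"
  shows "\<forall>N. osub v sm N \<and> cbnd v co N B \<and> (\<forall>x\<in>N. \<forall>i. i \<notin> J \<longrightarrow> co x i = 0) \<longrightarrow>
     (\<exists>S. finite S \<and> S \<subseteq> N \<and> N = ospan v sm S)"
  using assms
proof (induction J rule: finite_induct)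
  case empty
  show ?case
  proof (intro allI impI)
    fix N assume N: "osub v sm N \<and> cbnd v co N B \<and> (\<forall>x\<in>N. \<forall>i. i \<notin> {} \<longrightarrow> co x i = 0)"
    have "N = {0}"
    proof
      show "N \<subseteq> {0}"
      proof
        fix x assume "x \<in> N"
        then have "x = 0" using N by (intro co_eq) (simp add: co_0)
        then show "x \<in> {0}" by simp
      qed
      show "{0} \<subseteq> N" using N by (simp add: osub_def)
    qed
    moreover have "ospan v sm {} = {0}" unfolding ospan_def by simp
    ultimately show "\<exists>S. finite S \<and> S \<subseteq> N \<and> N = ospan v sm S" by (intro exI[of _ "{}"]) simp
  qed
next
  case (insert j J)
  show ?case
  proof (intro allI impI)
    fix N assume N: "osub v sm N \<and> cbnd v co N B \<and> (\<forall>x\<in>N. \<forall>i. i \<notin> insert j J \<longrightarrow> co x i = 0)"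
    define N' where "N' = {x\<in>N. co x j = 0}"
    have "osub v sm N'" using N unfolding N'_def osub_def by (auto simp: co_0 co_add co_sm)
    moreover have "cbnd v co N' B" using N unfolding N'_def cbnd_def by auto
    moreover have "\<forall>x\<in>N'. \<forall>i. i \<notin> J \<longrightarrow> co x i = 0" using N unfolding N'_def by auto
    ultimately obtain S' where S': "finite S'" "S' \<subseteq> N'" "N' = ospan v sm S'" using insert.IH by blast
    show "\<exists>S. finite S \<and> S \<subseteq> N \<and> N = ospan v sm S"
    proof (cases "\<forall>x\<in>N. co x j = 0")
      case True
      then have "N = N'" unfolding N'_def by auto
      then show ?thesis using S' by blast
    next
      case False
      let ?X = "{x\<in>N. co x j \<noteq> 0}"
      have "?X \<noteq> {}" using False by auto
      moreover have "\<forall>x\<in>?X. v (co x j) \<ge> B" using N unfolding cbnd_def pv_def by auto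
      ultimately obtain e where e: "e \<in> ?X" "\<forall>y\<in>?X. v (co e j) \<le> v (co y j)"
        using ex_min_int[where X="?X" and f="\<lambda>x. v (co x j)" and B=B] by blast
      have eS': "e \<notin> S'" using e S'(2) unfolding N'_def by auto
      have "N = ospan v sm (insert e S')"
      proof
        show "ospan v sm (insert e S') \<subseteq> N" using N S' e unfolding N'_def by (intro ospan_le) auto
        show "N \<subseteq> ospan v sm (insert e S')"
        proof
          fix x assume x: "x \<in> N"
          define a where "a = co x j / co e j"
          have "co x j \<in> pv v (v (co e j))" using e x by (cases "co x j = 0") (auto simp: pv_def)
          then have a0: "a \<in> pv v 0" unfolding a_def using pv_divide[of "co x j" "v (co e j)" "co e j"] e by simp
          define y where "y = x + sm (-a) e"
          have "sm (-a) e \<in> N" using N e a0 pv_uminus unfolding osub_def by auto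
          then have "y \<in> N" using N x unfolding y_def osub_def by auto
          moreover have "co y j = 0" using e unfolding y_def a_def by (simp add: co_add co_sm)
          ultimately have "y \<in> ospan v sm S'" using S'(3) unfolding N'_def by auto
          then obtain c where c: "y = (\<Sum>s\<in>S'. sm (c s) s)" "\<forall>s\<in>S'. c s \<in> val_ring v"
            unfolding ospan_def by blast
          have "x = (\<Sum>s\<in>insert e S'. sm ((c(e := a)) s) s)"
          proof -
            have "(\<Sum>s\<in>S'. sm ((c(e := a)) s) s) = (\<Sum>s\<in>S'. sm (c s) s)" using eS' by (intro sum.cong) auto
            then have "(\<Sum>s\<in>insert e S'. sm ((c(e := a)) s) s) = sm a e + y" using S'(1) eS' c(1) by simp
            also have "\<dots> = x" unfolding y_def by (rule co_eq) (simp add: co_add co_sm algebra_simps)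
            finally show ?thesis by simp
          qed
          moreover have "\<forall>s\<in>insert e S'. (c(e := a)) s \<in> val_ring v" using c(2) a0 by (auto simp: val_ring_pv)
          ultimately show "x \<in> ospan v sm (insert e S')" by (rule ospanI)
        qed
      qed
      moreover have "insert e S' \<subseteq> N" using S'(2) e(1) unfolding N'_def by auto
      ultimately show ?thesis using S'(1) by blast
    qed
  qed
qed

lemma fg: assumes "osub v sm N" "cbnd v co N B" shows "\<exists>S. finite S \<and> S \<subseteq> N \<and> N = ospan v sm S"
  using fg_aux[of "UNIV" B] assms by auto

end
end

lemma two_ne_one[simp]: "(2::2) \<noteq> 1" "(1::2) \<noteq> 2" by simp_all

definition vec2 :: "'a \<Rightarrow> 'a \<Rightarrow> 'a^2" where "vec2 a b = (\<chi> i. if i = 1 then a else b)"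
lemma vec2_nth[simp]: "vec2 a b $ 1 = a" "vec2 a b $ 2 = b" by (simp_all add: vec2_def)

definition mco :: "'a^2^2 \<Rightarrow> 2 \<times> 2 \<Rightarrow> 'a" where "mco A p = A $ fst p $ snd p"

lemma csys_vec: "csys ((*s) :: 'a::field \<Rightarrow> 'a^2 \<Rightarrow> 'a^2) (\<lambda>x i. x $ i)"
  unfolding csys_def by (simp add: vec_eq_iff)

lemma csys_mat: "csys (mat_smult :: 'a::field \<Rightarrow> 'a^2^2 \<Rightarrow> 'a^2^2) mco"
  unfolding csys_def mco_def by (auto simp: vec_eq_iff mat_smult_def)

definition det2 :: "'a::field^2 \<Rightarrow> 'a^2 \<Rightarrow> 'a" where "det2 e1 e2 = e1$1 * e2$2 - e1$2 * e2$1"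
definition cr1 :: "'a::field^2 \<Rightarrow> 'a^2 \<Rightarrow> 'a^2 \<Rightarrow> 'a" where
  "cr1 e1 e2 x = (x$1 * e2$2 - x$2 * e2$1) / det2 e1 e2"
definition cr2 :: "'a::field^2 \<Rightarrow> 'a^2 \<Rightarrow> 'a^2 \<Rightarrow> 'a" where
  "cr2 e1 e2 x = (e1$1 * x$2 - e1$2 * x$1) / det2 e1 e2"

lemma cr_id1:
  fixes a b c d x y :: "'a::field"
  assumes D: "a*d - b*c \<noteq> 0"
  shows "(x*d - y*c)/(a*d-b*c) * a + (a*y - b*x)/(a*d-b*c) * c = x"
proof -
  have h: "(x*d - y*c) * a + (a*y - b*x) * c = x * (a*d - b*c)" by algebra
  have "(x*d - y*c)/(a*d-b*c) * a + (a*y - b*x)/(a*d-b*c) * c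
      = ((x*d - y*c) * a + (a*y - b*x) * c) / (a*d - b*c)" by (simp add: add_divide_distrib)
  also have "\<dots> = x" unfolding h using D by simp
  finally show ?thesis .
qed

lemma cr_id2:
  fixes a b c d x y :: "'a::field"
  assumes D: "a*d - b*c \<noteq> 0"
  shows "(x*d - y*c)/(a*d-b*c) * b + (a*y - b*x)/(a*d-b*c) * d = y"
proof -
  have h: "(x*d - y*c) * b + (a*y - b*x) * d = y * (a*d - b*c)" by algebra
  have "(x*d - y*c)/(a*d-b*c) * b + (a*y - b*x)/(a*d-b*c) * d
      = ((x*d - y*c) * b + (a*y - b*x) * d) / (a*d - b*c)" by (simp add: add_divide_distrib)
  also have "\<dots> = y" unfolding h using D by simp
  finally show ?thesis .
qed

lemma cramer: "det2 e1 e2 \<noteq> 0 \<Longrightarrow> x = cr1 e1 e2 x *s e1 + cr2 e1 e2 x *s e2"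
  unfolding cr1_def cr2_def det2_def
  using cr_id1[of "e1$1" "e2$2" "e1$2" "e2$1" "x$1" "x$2"] cr_id2[of "e1$1" "e2$2" "e1$2" "e2$1" "x$1" "x$2"]
  by (simp add: vec_eq_iff forall_2)

lemma cr_lin:
  assumes "det2 e1 e2 \<noteq> 0"
  shows "cr1 e1 e2 (a *s e1 + c *s e2) = a" "cr2 e1 e2 (a *s e1 + c *s e2) = c"
  using assms unfolding cr1_def cr2_def det2_def by (simp_all add: field_simps)

lemma cr_add: "cr1 e1 e2 (x + y) = cr1 e1 e2 x + cr1 e1 e2 y" "cr2 e1 e2 (x + y) = cr2 e1 e2 x + cr2 e1 e2 y"
  unfolding cr1_def cr2_def by (simp_all add: add_divide_distrib[symmetric] algebra_simps)

lemma cr_smult: "cr1 e1 e2 (a *s x) = a * cr1 e1 e2 x" "cr2 e1 e2 (a *s x) = a * cr2 e1 e2 x"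
  unfolding cr1_def cr2_def by (simp_all add: algebra_simps)

lemma vec_decomp: "(x::'a::field^2) = x$1 *s axis 1 1 + x$2 *s axis 2 1"
  by (simp add: vec_eq_iff forall_2 axis_def)

lemma ker2:
  fixes a b c d :: "'b::field"
  assumes "a*d - b*c = 0"
  shows "\<exists>x y. (x \<noteq> 0 \<or> y \<noteq> 0) \<and> a*x + b*y = 0 \<and> c*x + d*y = 0"
proof (cases "a \<noteq> 0 \<or> b \<noteq> 0")
  case True
  have "c*b + d*(-a) = 0" using assms by (simp add: algebra_simps)
  then show ?thesis using True by (intro exI[of _ b] exI[of _ "-a"]) (auto simp: algebra_simps)
next
  case False
  then show ?thesis
  proof (cases "c \<noteq> 0 \<or> d \<noteq> 0")
    case True
    then show ?thesis using False by (intro exI[of _ d] exI[of _ "-c"]) (auto simp: algebra_simps)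
  next
    case False2: False
    then show ?thesis using False by (intro exI[of _ 1] exI[of _ 0]) auto
  qed
qed

context fixes b :: "'a::field^2 \<Rightarrow> 'a^2 \<Rightarrow> 'a" assumes bf: "sym_nondeg_bilinear b"
begin

lemma b_add1: "b (x + y) z = b x z + b y z" using bf unfolding sym_nondeg_bilinear_def by blast
lemma b_sm1: "b (c *s x) y = c * b x y" using bf unfolding sym_nondeg_bilinear_def by blast
lemma b_sym: "b x y = b y x" using bf unfolding sym_nondeg_bilinear_def by blast
lemma b_nd: "(\<And>y. b x y = 0) \<Longrightarrow> x = 0" using bf unfolding sym_nondeg_bilinear_def by blast
lemma b_add2: "b z (x + y) = b z x + b z y" using b_add1 b_sym by metis
lemma b_sm2: "b y (c *s x) = c * b y x" using b_sm1 b_sym by metis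

lemma b_comb1: "b (a *s e1 + c *s e2) y = a * b e1 y + c * b e2 y" by (simp add: b_add1 b_sm1)
lemma b_comb2: "b y (a *s e1 + c *s e2) = a * b y e1 + c * b y e2" by (simp add: b_add2 b_sm2)
lemma b_diff1: "b (x - z) y = b x y - b z y"
proof -
  have h: "x - z = 1 *s x + (-1) *s z" by (simp add: vec_eq_iff)
  have "b (1 *s x + (-1) *s z) y = 1 * b x y + (-1) * b z y" by (rule b_comb1)
  then show ?thesis unfolding h[symmetric] by simp
qed

lemma b_span0: assumes "det2 e1 e2 \<noteq> 0" "b x e1 = 0" "b x e2 = 0" shows "x = 0"
proof (rule b_nd)
  fix y
  have "b x y = b x (cr1 e1 e2 y *s e1 + cr2 e1 e2 y *s e2)" using cramer[OF assms(1), of y] by simp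
  then show "b x y = 0" using assms by (simp add: b_comb2)
qed

lemma dual_basis:
  assumes e: "det2 e1 e2 \<noteq> 0"
  shows "\<exists>f1 f2. det2 f1 f2 \<noteq> 0 \<and> b f1 e1 = 1 \<and> b f1 e2 = 0 \<and> b f2 e1 = 0 \<and> b f2 e2 = 1"
proof -
  have bx0: "b x y = x$1 * b (axis 1 1) y + x$2 * b (axis 2 1) y" for x y
  proof -
    have "b x y = b (x$1 *s axis 1 1 + x$2 *s axis 2 1) y"
      by (rule arg_cong[where f="\<lambda>z. b z y"], rule vec_decomp)
    also have "\<dots> = x$1 * b (axis 1 1) y + x$2 * b (axis 2 1) y" by (rule b_comb1)
    finally show ?thesis .
  qed
  define pp where "pp = b (axis 1 1) e1"
  define qq where "qq = b (axis 2 1) e1"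
  define rr where "rr = b (axis 1 1) e2"
  define ss where "ss = b (axis 2 1) e2"
  have bx: "b x e1 = x$1 * pp + x$2 * qq" "b x e2 = x$1 * rr + x$2 * ss" for x
    unfolding pp_def qq_def rr_def ss_def using bx0 by blast+
  define D where "D = pp * ss - qq*rr"
  have D: "D \<noteq> 0"
  proof
    assume "D = 0"
    then obtain \<alpha> \<beta> where ab: "\<alpha> \<noteq> 0 \<or> \<beta> \<noteq> 0" "pp*\<alpha> + qq*\<beta> = 0" "rr*\<alpha> + ss*\<beta> = 0"
      using ker2[of pp ss qq rr] unfolding D_def by auto
    have "vec2 \<alpha> \<beta> = 0" using ab by (intro b_span0[OF e]) (simp_all add: bx algebra_simps)
    then show False using ab(1) by (metis vec2_nth zero_index)
  qed
  define f1 where "f1 = vec2 (ss/D) (-rr/D)"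
  define f2 where "f2 = vec2 (-qq/D) (pp/D)"
  have "b f1 e1 = 1" unfolding f1_def bx using D by (simp add: field_simps; simp add: D_def algebra_simps)
  moreover have "b f1 e2 = 0" unfolding f1_def bx using D by (simp add: field_simps; simp add: D_def algebra_simps)
  moreover have "b f2 e1 = 0" unfolding f2_def bx using D by (simp add: field_simps; simp add: D_def algebra_simps)
  moreover have "b f2 e2 = 1" unfolding f2_def bx using D by (simp add: field_simps; simp add: D_def algebra_simps)
  moreover have "det2 f1 f2 = 1 / D" unfolding f1_def f2_def det2_def using D
    by (simp add: field_simps power2_eq_square; simp add: D_def algebra_simps)
  ultimately show ?thesis using D by (intro exI[of _ f1] exI[of _ f2]) simp
qed

end

context dval begin

definition span2 :: "'a^2 \<Rightarrow> 'a^2 \<Rightarrow> ('a^2) set" where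
  "span2 e1 e2 = {a *s e1 + c *s e2 | a c. a \<in> pv v 0 \<and> c \<in> pv v 0}"

lemma span2I: "a \<in> pv v 0 \<Longrightarrow> c \<in> pv v 0 \<Longrightarrow> a *s e1 + c *s e2 \<in> span2 e1 e2"
  unfolding span2_def by blast

lemma span2_e: "e1 \<in> span2 e1 e2" "e2 \<in> span2 e1 e2"
  using span2I[of 1 0 e1 e2] span2I[of 0 1 e1 e2] pv_one by simp_all

lemma lat_ospan: "lattice v L \<Longrightarrow> \<exists>S. finite S \<and> L = ospan v (*s) S"
  unfolding lattice_def o_lattice_def ospan_def by blast

lemma lat_osub: "lattice v L \<Longrightarrow> osub v (*s) L"
  using lat_ospan osub_ospan[OF csys_vec] by blast

lemma lat_bnd: "lattice v L \<Longrightarrow> \<exists>N. cbnd v (\<lambda>x i. x $ i) L N"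
  using lat_ospan ospan_bnd[OF csys_vec] by blast

lemma smult_sum: "(a::'a) *s (\<Sum>s\<in>S. c s *s (g s :: 'a^'n)) = (\<Sum>s\<in>S. (a * c s) *s g s)"
  by (simp add: vec_eq_iff sum_distrib_left mult.assoc)

lemma lat_scal: assumes L: "lattice v L" shows "\<exists>m. \<forall>a\<in>pv v m. a *s y \<in> L"
proof -
  obtain S c where S: "finite S" "S \<subseteq> L" "y = (\<Sum>s\<in>S. c s *s s)"
    using L unfolding lattice_def o_lattice_def by blast
  obtain B where B: "\<forall>s\<in>S. c s \<in> pv v B" using pv_bound_finite[OF S(1)] by blast
  have "a *s y \<in> L" if a: "a \<in> pv v (-B)" for a
  proof -
    have "a *s y = (\<Sum>s\<in>S. (a * c s) *s s)" unfolding S(3) by (rule smult_sum)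
    also have "\<dots> \<in> L"
    proof (rule osub_sum[OF lat_osub[OF L] S(1)])
      fix s assume s: "s \<in> S"
      have "a * c s \<in> pv v (-B + B)" using pv_mult[OF a] B s by blast
      then show "(a * c s) *s s \<in> L" using lat_osub[OF L] S(2) s unfolding osub_def by auto
    qed
    finally show ?thesis .
  qed
  then show ?thesis by blast
qed

lemma lat_box: assumes L: "lattice v L" shows "\<exists>m. \<forall>x. (\<forall>i. x $ i \<in> pv v m) \<longrightarrow> x \<in> L"
proof -
  obtain m1 where m1: "\<forall>a\<in>pv v m1. a *s axis 1 1 \<in> L" using lat_scal[OF L] by blast
  obtain m2 where m2: "\<forall>a\<in>pv v m2. a *s axis 2 1 \<in> L" using lat_scal[OF L] by blast
  have "x \<in> L" if x: "\<forall>i. x $ i \<in> pv v (max m1 m2)" for x :: "'a^2"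
  proof -
    have "x$1 \<in> pv v m1" "x$2 \<in> pv v m2"
      using pv_mono[of "x$1" "max m1 m2" m1] pv_mono[of "x$2" "max m1 m2" m2] x by auto
    then have "x$1 *s axis 1 1 \<in> L" "x$2 *s axis 2 1 \<in> L" using m1 m2 by auto
    then have "x$1 *s axis 1 1 + x$2 *s axis 2 1 \<in> L" using lat_osub[OF L] unfolding osub_def by blast
    then show ?thesis using vec_decomp[of x] by simp
  qed
  then show ?thesis by blast
qed

lemma lat_basis:
  assumes L: "lattice v L"
  shows "\<exists>e1 e2. det2 e1 e2 \<noteq> 0 \<and> L = span2 e1 e2"
proof -
  have os: "osub v (*s) L" by (rule lat_osub[OF L])
  obtain N where N: "\<forall>x\<in>L. \<forall>i. x $ i \<in> pv v N" using lat_bnd[OF L] unfolding cbnd_def by blast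
  obtain m where m: "\<forall>x. (\<forall>i. x $ i \<in> pv v m) \<longrightarrow> x \<in> L" using lat_box[OF L] by blast
  obtain t where t: "t \<noteq> 0" "v t = m" using v_surj by blast
  have tm: "t \<in> pv v m" using t by (simp add: pv_def)
  have ax: "axis i t \<in> L" for i :: 2 using m tm by (simp add: axis_def)
  let ?X2 = "{x\<in>L. x$2 \<noteq> 0}"
  have "?X2 \<noteq> {}" using ax[of 2] t by (auto intro!: exI[of _ "axis 2 t"])
  moreover have "\<forall>x\<in>?X2. v (x$2) \<ge> N" using N by (auto simp: pv_def)
  ultimately obtain e2 where e2: "e2 \<in> ?X2" "\<forall>y\<in>?X2. v (e2$2) \<le> v (y$2)"
    using ex_min_int[where X="?X2" and f="\<lambda>x. v (x$2)" and B=N] by blast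
  let ?X1 = "{x\<in>L. x$2 = 0 \<and> x$1 \<noteq> 0}"
  have "?X1 \<noteq> {}" using ax[of 1] t by (auto intro!: exI[of _ "axis 1 t"] simp: axis_def)
  moreover have "\<forall>x\<in>?X1. v (x$1) \<ge> N" using N by (auto simp: pv_def)
  ultimately obtain e1 where e1: "e1 \<in> ?X1" "\<forall>y\<in>?X1. v (e1$1) \<le> v (y$1)"
    using ex_min_int[where X="?X1" and f="\<lambda>x. v (x$1)" and B=N] by blast
  have det: "det2 e1 e2 \<noteq> 0" using e1 e2 by (simp add: det2_def)
  have "L = span2 e1 e2"
  proof
    show "span2 e1 e2 \<subseteq> L"
    proof
      fix x assume "x \<in> span2 e1 e2"
      then obtain a c where x: "x = a *s e1 + c *s e2" "a \<in> pv v 0" "c \<in> pv v 0" unfolding span2_def by blast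
      then show "x \<in> L" using os e1(1) e2(1) unfolding osub_def by auto
    qed
    show "L \<subseteq> span2 e1 e2"
    proof
      fix x assume x: "x \<in> L"
      define c where "c = x$2 / e2$2"
      have "x$2 \<in> pv v (v (e2$2))" using e2 x by (cases "x$2 = 0") (auto simp: pv_def)
      then have c0: "c \<in> pv v 0" unfolding c_def using pv_divide[of "x$2" "v (e2$2)" "e2$2"] e2 by simp
      define y where "y = x + (-c) *s e2"
      have "(-c) *s e2 \<in> L" using os e2(1) pv_uminus[OF c0] unfolding osub_def by blast
      then have yL: "y \<in> L" using os x unfolding y_def osub_def by auto
      have y2: "y$2 = 0" using e2 unfolding y_def c_def by simp
      define a where "a = y$1 / e1$1"
      have "y$1 \<in> pv v (v (e1$1))" using e1 yL y2 by (cases "y$1 = 0") (auto simp: pv_def)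
      then have a0: "a \<in> pv v 0" unfolding a_def using pv_divide[of "y$1" "v (e1$1)" "e1$1"] e1 by simp
      have "x = a *s e1 + c *s e2"
        using e1 e2 y2 unfolding a_def y_def by (simp add: vec_eq_iff forall_2 field_simps)
      then show "x \<in> span2 e1 e2" using a0 c0 span2I by simp
    qed
  qed
  then show ?thesis using det by blast
qed

lemma span2_ospan:
  assumes det: "det2 e1 e2 \<noteq> 0"
  shows "span2 e1 e2 = ospan v (*s) {e1, e2}"
proof -
  have ne: "e1 \<noteq> e2" using det by (auto simp: det2_def algebra_simps)
  show ?thesis
  proof
    show "span2 e1 e2 \<subseteq> ospan v (*s) {e1, e2}"
    proof
      fix x assume "x \<in> span2 e1 e2"
      then obtain a c where x: "x = a *s e1 + c *s e2" "a \<in> pv v 0" "c \<in> pv v 0" unfolding span2_def by blast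
      let ?c = "\<lambda>s. if s = e1 then a else c"
      have "x = (\<Sum>s\<in>{e1,e2}. ?c s *s s)" using ne x by simp
      moreover have "\<forall>s\<in>{e1,e2}. ?c s \<in> val_ring v" using x by (simp add: val_ring_pv)
      ultimately show "x \<in> ospan v (*s) {e1, e2}" by (rule ospanI)
    qed
    show "ospan v (*s) {e1, e2} \<subseteq> span2 e1 e2"
    proof
      fix x assume "x \<in> ospan v (*s) {e1, e2}"
      then obtain c where x: "x = (\<Sum>s\<in>{e1,e2}. c s *s s)" "\<forall>s\<in>{e1,e2}. c s \<in> val_ring v"
        unfolding ospan_def by blast
      then show "x \<in> span2 e1 e2" using ne span2I[of "c e1" "c e2" e1 e2] by (simp add: val_ring_pv)
    qed
  qed
qed

lemma span2_lattice:
  assumes det: "det2 e1 e2 \<noteq> 0"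
  shows "lattice v (span2 e1 e2)"
proof -
  have ne: "e1 \<noteq> e2" using det by (auto simp: det2_def algebra_simps)
  have "\<exists>S c. finite S \<and> S \<subseteq> span2 e1 e2 \<and> x = (\<Sum>s\<in>S. c s *s s)" for x
  proof -
    let ?c = "\<lambda>s. if s = e1 then cr1 e1 e2 x else cr2 e1 e2 x"
    have "x = (\<Sum>s\<in>{e1,e2}. ?c s *s s)" using ne cramer[OF det, of x] by simp
    then show ?thesis using span2_e by (intro exI[of _ "{e1,e2}"] exI[of _ ?c]) auto
  qed
  then show ?thesis unfolding lattice_def o_lattice_def using span2_ospan[OF det]
    unfolding ospan_def by blast
qed

end

context dval begin

definition mbox :: "('a^2^2) set \<Rightarrow> int \<Rightarrow> bool" where
  "mbox A K \<longleftrightarrow> (\<forall>X. (\<forall>i j. X$i$j \<in> pv v K) \<longrightarrow> X \<in> A)"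

definition good :: "('a^2^2) set \<Rightarrow> bool" where
  "good A \<longleftrightarrow> osub v mat_smult A \<and> (\<exists>N. cbnd v mco A N) \<and> (\<exists>K. mbox A K) \<and> mat 1 \<in> A
     \<and> (\<forall>x\<in>A. \<forall>y\<in>A. x ** y \<in> A)"

lemma good_order: assumes g: "good A" shows "is_order v A"
proof -
  have os: "osub v mat_smult A" and mb: "\<exists>K. mbox A K" and bd: "\<exists>N. cbnd v mco A N"
    using g unfolding good_def by blast+
  obtain N where N: "cbnd v mco A N" using bd by blast
  obtain S where S: "finite S" "S \<subseteq> A" "A = ospan v mat_smult S" using fg[OF csys_mat os N] by blast
  obtain K where K: "mbox A K" using mb by blast
  have sp: "\<exists>S c. finite S \<and> S \<subseteq> A \<and> X = (\<Sum>s\<in>S. mat_smult (c s) s)" for X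
  proof -
    obtain B where B: "\<forall>p\<in>UNIV. mco X p \<in> pv v B" using pv_bound_finite[of "UNIV :: (2 \<times> 2) set" "mco X"] by auto
    obtain t where t: "t \<noteq> 0" "v t = K - B" using v_surj by blast
    have tK: "t \<in> pv v (K - B)" using t by (simp add: pv_def)
    define Y where "Y = mat_smult t X"
    have "Y$i$j \<in> pv v K" for i j
    proof -
      have "X$i$j \<in> pv v B" using B unfolding mco_def by (metis UNIV_I fst_conv snd_conv)
      then have "t * X$i$j \<in> pv v (K - B + B)" using pv_mult[OF tK] by blast
      then show ?thesis unfolding Y_def mat_smult_def by simp
    qed
    then have "Y \<in> A" using K unfolding mbox_def by blast
    moreover have "X = mat_smult (1/t) Y" unfolding Y_def mat_smult_def using t by (simp add: vec_eq_iff)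
    ultimately show ?thesis by (intro exI[of _ "{Y}"] exI[of _ "\<lambda>_. 1/t"]) auto
  qed
  have "o_lattice v mat_smult A" unfolding o_lattice_def using S(1,3) sp unfolding ospan_def by blast
  then show ?thesis using g unfolding is_order_def good_def by blast
qed

lemma good_Int: assumes "good A" "good B" shows "good (A \<inter> B)"
proof -
  obtain N where "cbnd v mco A N" using assms unfolding good_def by blast
  then have N: "cbnd v mco (A \<inter> B) N" unfolding cbnd_def by blast
  obtain K1 K2 where K: "mbox A K1" "mbox B K2" using assms unfolding good_def by blast
  have "mbox (A \<inter> B) (max K1 K2)"
    using K pv_mono unfolding mbox_def by (meson IntI max.cobounded1 max.cobounded2)
  moreover have "osub v mat_smult (A \<inter> B)" using assms unfolding good_def osub_def by blast
  ultimately show ?thesis using N assms unfolding good_def by blast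
qed

lemma mat_smult_mv: "mat_smult c A *v x = c *s (A *v x)"
  by (simp add: vec_eq_iff matrix_vector_mult_def mat_smult_def sum_distrib_left mult.assoc)

lemma mv_axis: "((A::'a^2^2) *v axis (j::2) t) $ i = A$i$j * (t::'a)"
  using exhaust_2[of j] by (auto simp: matrix_vector_mult_def axis_def sum_2)

lemma mv_comp: "((A::'a^2^2) *v x) $ i = A$i$1 * x$1 + A$i$2 * (x::'a^2) $ 2"
  by (simp add: matrix_vector_mult_def sum_2)

lemma good_End: assumes L: "lattice v L" shows "good (End_lat L)"
proof -
  have os: "osub v (*s) L" by (rule lat_osub[OF L])
  obtain N where N: "\<forall>x\<in>L. \<forall>i. x $ i \<in> pv v N" using lat_bnd[OF L] unfolding cbnd_def by blast
  obtain m where m: "\<forall>x. (\<forall>i. x $ i \<in> pv v m) \<longrightarrow> x \<in> L" using lat_box[OF L] by blast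
  obtain t where t: "t \<noteq> 0" "v t = m" using v_surj by blast
  have tm: "t \<in> pv v m" using t by (simp add: pv_def)
  have ax: "axis i t \<in> L" for i :: 2 using m tm by (simp add: axis_def)
  have "osub v mat_smult (End_lat L)"
    using os unfolding osub_def End_lat_def by (simp add: mat_smult_mv matrix_vector_mult_add_rdistrib)
  moreover have "cbnd v mco (End_lat L) (N - m)"
    unfolding cbnd_def
  proof (intro ballI allI)
    fix \<sigma> p assume s: "\<sigma> \<in> End_lat L"
    obtain i j :: 2 where p: "p = (i, j)" by (cases p)
    have "\<sigma> *v axis j t \<in> L" using s ax unfolding End_lat_def by blast
    then have "\<sigma>$i$j * t \<in> pv v N" using N mv_axis[of \<sigma> j t i] by metis
    then have "\<sigma>$i$j * t / t \<in> pv v (N - v t)" by (rule pv_divide[OF _ t(1)])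
    then show "mco \<sigma> p \<in> pv v (N - m)" unfolding mco_def p using t by simp
  qed
  moreover have "mbox (End_lat L) (m - N)"
    unfolding mbox_def End_lat_def mem_Collect_eq
  proof (intro allI impI ballI)
    fix X :: "'a^2^2" and x assume X: "\<forall>i j. X$i$j \<in> pv v (m - N)" and x: "x \<in> L"
    have "(X *v x) $ i \<in> pv v m" for i
    proof -
      have "X$i$1 * x$1 \<in> pv v (m - N + N)" "X$i$2 * x$2 \<in> pv v (m - N + N)"
        using X N x pv_mult by blast+
      then show ?thesis unfolding mv_comp using pv_add by simp
    qed
    then show "X *v x \<in> L" using m by blast
  qed
  moreover have "mat 1 \<in> End_lat L" unfolding End_lat_def by simp
  moreover have "\<forall>x\<in>End_lat L. \<forall>y\<in>End_lat L. x ** y \<in> End_lat L"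
    unfolding End_lat_def by (simp add: matrix_vector_mul_assoc[symmetric])
  ultimately show ?thesis unfolding good_def by blast
qed

end

definition dot2 :: "'a::field^2 \<Rightarrow> 'a^2 \<Rightarrow> 'a" where "dot2 l z = l$1 * z$1 + l$2 * z$2"
definition outer :: "'a::field^2 \<Rightarrow> 'a^2 \<Rightarrow> 'a^2^2" where "outer u w = (\<chi> r c. u$r * w$c)"
definition crm1 :: "'a::field^2 \<Rightarrow> 'a^2 \<Rightarrow> 'a^2" where
  "crm1 e1 e2 = vec2 (e2$2 / det2 e1 e2) (- e2$1 / det2 e1 e2)"
definition crm2 :: "'a::field^2 \<Rightarrow> 'a^2 \<Rightarrow> 'a^2" where
  "crm2 e1 e2 = vec2 (- e1$2 / det2 e1 e2) (e1$1 / det2 e1 e2)"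

lemma outer_mv: "outer u l *v x = dot2 l x *s u"
  by (simp add: vec_eq_iff outer_def matrix_vector_mult_def sum_2 dot2_def algebra_simps)

lemma dot2_smult: "dot2 l (c *s z) = c * dot2 l z" by (simp add: dot2_def algebra_simps)
lemma dot2_add: "dot2 l (x + z) = dot2 l x + dot2 l z" by (simp add: dot2_def algebra_simps)

lemma crm: "cr1 e1 e2 x = dot2 (crm1 e1 e2) x" "cr2 e1 e2 x = dot2 (crm2 e1 e2) x"
  by (simp_all add: cr1_def cr2_def crm1_def crm2_def dot2_def diff_divide_distrib algebra_simps)

lemma mv_smult: "(A::'a::field^2^2) *v (c *s x) = c *s (A *v x)"
  by (simp add: vec_eq_iff matrix_vector_mult_def sum_distrib_left algebra_simps)

lemma mv_add: "(A::'a::field^2^2) *v (x + y) = A *v x + A *v y"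
  by (simp add: matrix_vector_right_distrib)

lemma mat_smult_mv2: "mat_smult c A *v x = c *s ((A::'a::field^2^2) *v x)"
  by (simp add: vec_eq_iff matrix_vector_mult_def mat_smult_def sum_distrib_left mult.assoc)

lemma Y_scalar:
  assumes det: "det2 e1 e2 \<noteq> 0"
  shows "outer e1 l ** \<sigma> ** outer w (crm1 e1 e2) + outer e2 l ** \<sigma> ** outer w (crm2 e1 e2)
       = mat_smult (dot2 l (\<sigma> *v w)) (mat 1)"
proof -
  have "(outer e1 l ** \<sigma> ** outer w (crm1 e1 e2) + outer e2 l ** \<sigma> ** outer w (crm2 e1 e2)) *v x
      = mat_smult (dot2 l (\<sigma> *v w)) (mat 1) *v x" for x
  proof -
    have "(outer e1 l ** \<sigma> ** outer w (crm1 e1 e2) + outer e2 l ** \<sigma> ** outer w (crm2 e1 e2)) *v x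
        = (cr1 e1 e2 x * dot2 l (\<sigma> *v w)) *s e1 + (cr2 e1 e2 x * dot2 l (\<sigma> *v w)) *s e2"
      by (simp add: matrix_vector_mult_add_rdistrib matrix_vector_mul_assoc[symmetric] outer_mv mv_smult
          dot2_smult crm)
    also have "\<dots> = dot2 l (\<sigma> *v w) *s (cr1 e1 e2 x *s e1 + cr2 e1 e2 x *s e2)"
      by (simp add: vec_eq_iff algebra_simps)
    also have "\<dots> = dot2 l (\<sigma> *v w) *s x" using cramer[OF det, of x] by simp
    also have "\<dots> = mat_smult (dot2 l (\<sigma> *v w)) (mat 1) *v x" by (simp add: mat_smult_mv2)
    finally show ?thesis .
  qed
  then show ?thesis using matrix_eq by blast
qed

lemma mat_smult_one_mult: "mat_smult a (mat 1) ** mat_smult c (mat 1) = mat_smult (a * c) (mat (1::'a::field) :: 'a^2^2)"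
  by (simp add: vec_eq_iff forall_2 matrix_matrix_mult_def mat_smult_def mat_def sum_2)

context dval begin

lemma scal_int:
  assumes R: "is_order v R" and t: "mat_smult \<tau> (mat 1) \<in> R"
  shows "\<tau> \<in> pv v 0"
proof (rule ccontr)
  assume nt: "\<tau> \<notin> pv v 0"
  then have t0: "\<tau> \<noteq> 0" "v \<tau> < 0" by (auto simp: pv_def)
  obtain S where S: "finite S" "R = ospan v mat_smult S" using R unfolding is_order_def o_lattice_def ospan_def by blast
  obtain N where N: "cbnd v mco R N" using ospan_bnd[OF csys_mat S(1)] S(2) by auto
  have one: "mat 1 \<in> R" and mul: "\<forall>x\<in>R. \<forall>y\<in>R. x ** y \<in> R" using R unfolding is_order_def by auto
  have pw: "mat_smult (\<tau> ^ n) (mat 1) \<in> R" for n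
  proof (induction n)
    case 0 then show ?case using one by (simp add: mat_smult_def vec_eq_iff)
  next
    case (Suc n)
    have "mat_smult (\<tau> ^ n) (mat 1) ** mat_smult \<tau> (mat 1) \<in> R" using mul Suc t by blast
    then show ?case by (simp add: mat_smult_one_mult mult.commute)
  qed
  obtain n where n: "\<tau> ^ n \<notin> pv v N" using pv_power_unbounded[OF t0] by blast
  have "mco (mat_smult (\<tau> ^ n) (mat 1)) (1, 1) \<in> pv v N" using N pw unfolding cbnd_def by blast
  then show False using n by (simp add: mco_def mat_smult_def mat_def)
qed

lemma span2_cr:
  assumes det: "det2 e1 e2 \<noteq> 0" and x: "x \<in> span2 e1 e2"
  shows "cr1 e1 e2 x \<in> pv v 0" "cr2 e1 e2 x \<in> pv v 0"
proof -
  obtain a c where "x = a *s e1 + c *s e2" "a \<in> pv v 0" "c \<in> pv v 0" using x unfolding span2_def by blast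
  then show "cr1 e1 e2 x \<in> pv v 0" "cr2 e1 e2 x \<in> pv v 0" using cr_lin[OF det] by simp_all
qed

lemma End_max: assumes L: "lattice v L" shows "maximal_order v (End_lat L)"
proof -
  obtain e1 e2 where e: "det2 e1 e2 \<noteq> 0" "L = span2 e1 e2" using lat_basis[OF L] by blast
  have os: "osub v (*s) L" by (rule lat_osub[OF L])
  have ord: "is_order v (End_lat L)" using good_order[OF good_End[OF L]] .
  have eL: "e1 \<in> L" "e2 \<in> L" using e span2_e by auto
  have crL: "cr1 e1 e2 x \<in> pv v 0" "cr2 e1 e2 x \<in> pv v 0" if "x \<in> L" for x
    using span2_cr[OF e(1)] that e(2) by auto
  have PE: "outer u (crm1 e1 e2) \<in> End_lat L" "outer u (crm2 e1 e2) \<in> End_lat L" if u: "u \<in> L" for u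
    unfolding End_lat_def using crL u os unfolding osub_def by (auto simp: outer_mv crm[symmetric])
  have "R' = End_lat L" if R': "is_order v R'" "End_lat L \<subseteq> R'" for R'
  proof -
    obtain S where S: "finite S" "R' = ospan v mat_smult S" using R' unfolding is_order_def o_lattice_def ospan_def by blast
    have osR: "osub v mat_smult R'" using osub_ospan[OF csys_mat S(1)] S(2) by simp
    have mul: "\<forall>x\<in>R'. \<forall>y\<in>R'. x ** y \<in> R'" using R' unfolding is_order_def by auto
    have "\<sigma> \<in> End_lat L" if s: "\<sigma> \<in> R'" for \<sigma>
    proof -
      have coef: "dot2 l (\<sigma> *v w) \<in> pv v 0" if l: "l = crm1 e1 e2 \<or> l = crm2 e1 e2" and w: "w \<in> L" for l w
      proof -
        have m1: "outer e1 l \<in> R'" "outer e2 l \<in> R'" using PE eL l R'(2) by auto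
        have m2: "outer w (crm1 e1 e2) \<in> R'" "outer w (crm2 e1 e2) \<in> R'" using PE w R'(2) by auto
        have "outer e1 l ** \<sigma> ** outer w (crm1 e1 e2) \<in> R'" "outer e2 l ** \<sigma> ** outer w (crm2 e1 e2) \<in> R'"
          using mul m1 m2 s by blast+
        then have "outer e1 l ** \<sigma> ** outer w (crm1 e1 e2) + outer e2 l ** \<sigma> ** outer w (crm2 e1 e2) \<in> R'"
          using osR unfolding osub_def by blast
        then have "mat_smult (dot2 l (\<sigma> *v w)) (mat 1) \<in> R'" unfolding Y_scalar[OF e(1)] .
        then show ?thesis by (rule scal_int[OF R'(1)])
      qed
      have "\<sigma> *v x \<in> L" if x: "x \<in> L" for x
      proof -
        have "\<sigma> *v x = cr1 e1 e2 (\<sigma> *v x) *s e1 + cr2 e1 e2 (\<sigma> *v x) *s e2" by (rule cramer[OF e(1)])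
        moreover have "cr1 e1 e2 (\<sigma> *v x) \<in> pv v 0" "cr2 e1 e2 (\<sigma> *v x) \<in> pv v 0"
        proof -
          have xx: "x = cr1 e1 e2 x *s e1 + cr2 e1 e2 x *s e2" by (rule cramer[OF e(1)])
          have "\<sigma> *v x = cr1 e1 e2 x *s (\<sigma> *v e1) + cr2 e1 e2 x *s (\<sigma> *v e2)"
            by (subst xx) (simp add: mv_add mv_smult)
          then have "cr1 e1 e2 (\<sigma> *v x) = cr1 e1 e2 x * dot2 (crm1 e1 e2) (\<sigma> *v e1) + cr2 e1 e2 x * dot2 (crm1 e1 e2) (\<sigma> *v e2)"
               "cr2 e1 e2 (\<sigma> *v x) = cr1 e1 e2 x * dot2 (crm2 e1 e2) (\<sigma> *v e1) + cr2 e1 e2 x * dot2 (crm2 e1 e2) (\<sigma> *v e2)"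
            by (simp_all add: crm dot2_add dot2_smult)
          moreover have "dot2 (crm1 e1 e2) (\<sigma> *v e1) \<in> pv v 0" "dot2 (crm1 e1 e2) (\<sigma> *v e2) \<in> pv v 0"
              "dot2 (crm2 e1 e2) (\<sigma> *v e1) \<in> pv v 0" "dot2 (crm2 e1 e2) (\<sigma> *v e2) \<in> pv v 0"
            using coef eL by auto
          moreover have "cr1 e1 e2 x \<in> pv v 0" "cr2 e1 e2 x \<in> pv v 0" using crL x by auto
          ultimately show "cr1 e1 e2 (\<sigma> *v x) \<in> pv v 0" "cr2 e1 e2 (\<sigma> *v x) \<in> pv v 0"
            using pv_mult[of _ 0 _ 0] pv_add by (metis add_0)+
        qed
        ultimately show ?thesis using span2I e(2) by metis
      qed
      then show ?thesis unfolding End_lat_def by blast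
    qed
    then show ?thesis using R'(2) by blast
  qed
  then show ?thesis unfolding maximal_order_def using ord by blast
qed

end

lemma mv_sum_mat: "(\<Sum>t\<in>T. mat_smult (d t) t) *v x = (\<Sum>t\<in>T. d t *s ((t::'a::field^2^2) *v x))"
  by (induction T rule: infinite_finite_induct) (simp_all add: matrix_vector_mult_add_rdistrib mat_smult_mv2)

lemma mv_sum_vec: "(A::'a::field^2^2) *v (\<Sum>g\<in>G. c g *s g) = (\<Sum>g\<in>G. c g *s (A *v g))"
  by (induction G rule: infinite_finite_induct) (simp_all add: mv_add mv_smult)

lemma End_scale: assumes c: "(c::'a::field) \<noteq> 0" shows "End_lat ((\<lambda>x. c *s x) ` A) = End_lat A"
proof
  show "End_lat A \<subseteq> End_lat ((\<lambda>x. c *s x) ` A)"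
  proof
    fix \<sigma> assume s: "\<sigma> \<in> End_lat A"
    have "\<sigma> *v y \<in> (\<lambda>x. c *s x) ` A" if y: "y \<in> (\<lambda>x. c *s x) ` A" for y
    proof -
      obtain x where x: "x \<in> A" "y = c *s x" using y by blast
      have "\<sigma> *v x \<in> A" using s x unfolding End_lat_def by blast
      moreover have "\<sigma> *v y = c *s (\<sigma> *v x)" unfolding x(2) by (rule mv_smult)
      ultimately show ?thesis by blast
    qed
    then show "\<sigma> \<in> End_lat ((\<lambda>x. c *s x) ` A)" unfolding End_lat_def by blast
  qed
  show "End_lat ((\<lambda>x. c *s x) ` A) \<subseteq> End_lat A"
  proof
    fix \<sigma> assume s: "\<sigma> \<in> End_lat ((\<lambda>x. c *s x) ` A)"
    have "\<sigma> *v x \<in> A" if x: "x \<in> A" for x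
    proof -
      have "\<sigma> *v (c *s x) \<in> (\<lambda>x. c *s x) ` A" using s x unfolding End_lat_def by blast
      then obtain y where y: "y \<in> A" "c *s (\<sigma> *v x) = c *s y" by (auto simp: mv_smult)
      then have "\<sigma> *v x = y" using c by (simp add: vec_eq_iff)
      then show ?thesis using y by simp
    qed
    then show "\<sigma> \<in> End_lat A" unfolding End_lat_def by blast
  qed
qed

context dval begin

lemma dual_scale:
  assumes bf: "sym_nondeg_bilinear b" and c: "c \<noteq> 0"
  shows "dual_lattice v b ((\<lambda>x. c *s x) ` L) = (\<lambda>x. inverse c *s x) ` dual_lattice v b L"
proof
  show "dual_lattice v b ((\<lambda>x. c *s x) ` L) \<subseteq> (\<lambda>x. inverse c *s x) ` dual_lattice v b L"
  proof
    fix x assume x: "x \<in> dual_lattice v b ((\<lambda>x. c *s x) ` L)"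
    have "b (c *s x) y \<in> val_ring v" if y: "y \<in> L" for y
    proof -
      have "b x (c *s y) \<in> val_ring v" using x y unfolding dual_lattice_def by blast
      then show ?thesis by (simp add: b_sm1[OF bf] b_sm2[OF bf])
    qed
    then have "c *s x \<in> dual_lattice v b L" unfolding dual_lattice_def by blast
    moreover have "x = inverse c *s (c *s x)" using c by (simp add: vector_smult_assoc)
    ultimately show "x \<in> (\<lambda>x. inverse c *s x) ` dual_lattice v b L" by blast
  qed
  show "(\<lambda>x. inverse c *s x) ` dual_lattice v b L \<subseteq> dual_lattice v b ((\<lambda>x. c *s x) ` L)"
  proof
    fix x assume "x \<in> (\<lambda>x. inverse c *s x) ` dual_lattice v b L"
    then obtain z where z: "z \<in> dual_lattice v b L" "x = inverse c *s z" by blast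
    have "b x y' \<in> val_ring v" if y': "y' \<in> (\<lambda>x. c *s x) ` L" for y'
    proof -
      obtain y where y: "y \<in> L" "y' = c *s y" using y' by blast
      have "b x y' = b z y" unfolding z(2) y(2) using c by (simp add: b_sm1[OF bf] b_sm2[OF bf])
      then show ?thesis using z(1) y(1) unfolding dual_lattice_def by simp
    qed
    then show "x \<in> dual_lattice v b ((\<lambda>x. c *s x) ` L)" unfolding dual_lattice_def by blast
  qed
qed

lemma dual_span2:
  assumes bf: "sym_nondeg_bilinear b"
  and det: "det2 e1 e2 \<noteq> 0" and f: "b f1 e1 = 1" "b f1 e2 = 0" "b f2 e1 = 0" "b f2 e2 = 1"
  shows "dual_lattice v b (span2 e1 e2) = span2 f1 f2"
proof
  show "dual_lattice v b (span2 e1 e2) \<subseteq> span2 f1 f2"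
  proof
    fix x assume "x \<in> dual_lattice v b (span2 e1 e2)"
    then have x: "b x e1 \<in> pv v 0" "b x e2 \<in> pv v 0" using span2_e unfolding dual_lattice_def
      by (auto simp: val_ring_pv)
    define z where "z = b x e1 *s f1 + b x e2 *s f2"
    have "x - z = 0"
    proof (rule b_span0[OF bf det])
      show "b (x - z) e1 = 0" unfolding z_def by (simp add: b_diff1[OF bf] b_comb1[OF bf] f)
      show "b (x - z) e2 = 0" unfolding z_def by (simp add: b_diff1[OF bf] b_comb1[OF bf] f)
    qed
    then have xz: "x = z" by simp
    have "z \<in> span2 f1 f2" unfolding z_def by (rule span2I[OF x(1) x(2)])
    then show "x \<in> span2 f1 f2" using xz by simp
  qed
  show "span2 f1 f2 \<subseteq> dual_lattice v b (span2 e1 e2)"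
  proof
    fix x assume "x \<in> span2 f1 f2"
    then obtain a c where x: "x = a *s f1 + c *s f2" "a \<in> pv v 0" "c \<in> pv v 0" unfolding span2_def by blast
    have "b x y \<in> val_ring v" if yS: "y \<in> span2 e1 e2" for y
    proof -
      obtain a' c' where y: "y = a' *s e1 + c' *s e2" "a' \<in> pv v 0" "c' \<in> pv v 0"
        using yS unfolding span2_def by blast
      have "b x y = a * b f1 y + c * b f2 y" unfolding x by (rule b_comb1[OF bf])
      also have "\<dots> = a * a' + c * c'" unfolding y by (simp add: b_comb2[OF bf] f)
      finally have "b x y = a * a' + c * c'" .
      moreover have "a*a' + c*c' \<in> pv v 0" using pv_mult[OF x(2) y(2)] pv_mult[OF x(3) y(3)] pv_add by simp
      ultimately show ?thesis by (simp add: val_ring_pv)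
    qed
    then show "x \<in> dual_lattice v b (span2 e1 e2)" unfolding dual_lattice_def by blast
  qed
qed

lemma lat_dual:
  assumes bf: "sym_nondeg_bilinear b" and L: "lattice v L"
  shows "lattice v (dual_lattice v b L) \<and> dual_lattice v b (dual_lattice v b L) = L"
proof -
  obtain e1 e2 where e: "det2 e1 e2 \<noteq> 0" "L = span2 e1 e2" using lat_basis[OF L] by blast
  obtain f1 f2 where f: "det2 f1 f2 \<noteq> 0" "b f1 e1 = 1" "b f1 e2 = 0" "b f2 e1 = 0" "b f2 e2 = 1"
    using dual_basis[OF bf e(1)] by blast
  have d: "dual_lattice v b L = span2 f1 f2" using dual_span2[OF bf e(1) f(2-5)] e(2) by simp
  have g: "b e1 f1 = 1" "b e1 f2 = 0" "b e2 f1 = 0" "b e2 f2 = 1"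
    using f(2-5) b_sym[OF bf, of e1 f1] b_sym[OF bf, of e1 f2] b_sym[OF bf, of e2 f1] b_sym[OF bf, of e2 f2]
    by simp_all
  have "dual_lattice v b (span2 f1 f2) = span2 e1 e2" by (rule dual_span2[OF bf f(1) g])
  then show ?thesis using d e(2) span2_lattice[OF f(1)] by simp
qed

lemma adj_End:
  assumes adj: "adjoint_form \<iota> b" and s: "\<sigma> \<in> End_lat L"
  shows "\<iota> \<sigma> \<in> End_lat (dual_lattice v b L)"
proof -
  have "\<iota> \<sigma> *v x \<in> dual_lattice v b L" if x: "x \<in> dual_lattice v b L" for x
  proof -
    have "b (\<iota> \<sigma> *v x) y \<in> val_ring v" if y: "y \<in> L" for y
    proof -
      have "b (\<iota> \<sigma> *v x) y = b x (\<sigma> *v y)" using adj unfolding adjoint_form_def by simp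
      moreover have "\<sigma> *v y \<in> L" using s y unfolding End_lat_def by blast
      ultimately show ?thesis using x unfolding dual_lattice_def by simp
    qed
    then show ?thesis unfolding dual_lattice_def by blast
  qed
  then show ?thesis unfolding End_lat_def by blast
qed

lemma iota_End:
  assumes bf: "sym_nondeg_bilinear b" and adj: "adjoint_form \<iota> b" and inv: "involution \<iota>"
    and L: "lattice v L"
  shows "\<iota> ` End_lat L = End_lat (dual_lattice v b L)"
proof
  show "\<iota> ` End_lat L \<subseteq> End_lat (dual_lattice v b L)" using adj_End[OF adj] by blast
  show "End_lat (dual_lattice v b L) \<subseteq> \<iota> ` End_lat L"
  proof
    fix \<tau> assume "\<tau> \<in> End_lat (dual_lattice v b L)"
    then have "\<iota> \<tau> \<in> End_lat (dual_lattice v b (dual_lattice v b L))" by (rule adj_End[OF adj])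
    then have "\<iota> \<tau> \<in> End_lat L" using lat_dual[OF bf L] by simp
    moreover have "\<tau> = \<iota> (\<iota> \<tau>)" using inv unfolding involution_def by simp
    ultimately show "\<tau> \<in> \<iota> ` End_lat L" by blast
  qed
qed

lemma max_End: assumes R: "maximal_order v R" shows "\<exists>M. lattice v M \<and> R = End_lat M"
proof -
  have Ro: "is_order v R" using R unfolding maximal_order_def by blast
  obtain S where S: "finite S" "R = ospan v mat_smult S"
    using Ro unfolding is_order_def o_lattice_def ospan_def by blast
  have osR: "osub v mat_smult R" using osub_ospan[OF csys_mat S(1)] S(2) by simp
  have SR: "S \<subseteq> R" using ospan_sub[OF csys_mat S(1)] S(2) by simp
  have one: "mat 1 \<in> R" and mul: "\<forall>x\<in>R. \<forall>y\<in>R. x ** y \<in> R" using Ro unfolding is_order_def by auto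
  define G where "G = (\<lambda>(s, j). s *v axis j 1) ` (S \<times> (UNIV :: 2 set))"
  have fG: "finite G" unfolding G_def using S(1) by simp
  define M where "M = ospan v (*s) G"
  have osM: "osub v (*s) M" unfolding M_def by (rule osub_ospan[OF csys_vec fG])
  have GM: "G \<subseteq> M" unfolding M_def by (rule ospan_sub[OF csys_vec fG])
  have rax: "r *v axis j 1 \<in> M" if r: "r \<in> R" for r j
  proof -
    obtain d where d: "r = (\<Sum>t\<in>S. mat_smult (d t) t)" "\<forall>t\<in>S. d t \<in> val_ring v"
      using r S(2) unfolding ospan_def by blast
    have "r *v axis j 1 = (\<Sum>t\<in>S. d t *s (t *v axis j 1))" unfolding d(1) by (rule mv_sum_mat)
    also have "\<dots> \<in> M"
    proof (rule osub_sum[OF osM S(1)])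
      fix t assume t: "t \<in> S"
      have "t *v axis j 1 \<in> M" using GM t unfolding G_def by auto
      then show "d t *s (t *v axis j 1) \<in> M" using osM d(2) t unfolding osub_def by (auto simp: val_ring_pv)
    qed
    finally show ?thesis .
  qed
  have RM: "r *v m \<in> M" if r: "r \<in> R" and m: "m \<in> M" for r m
  proof -
    obtain c where c: "m = (\<Sum>g\<in>G. c g *s g)" "\<forall>g\<in>G. c g \<in> val_ring v"
      using m unfolding M_def ospan_def by blast
    have "r *v m = (\<Sum>g\<in>G. c g *s (r *v g))" unfolding c(1) by (rule mv_sum_vec)
    also have "\<dots> \<in> M"
    proof (rule osub_sum[OF osM fG])
      fix g assume g: "g \<in> G"
      then obtain s j where sj: "s \<in> S" "g = s *v axis j 1" unfolding G_def by auto
      have "r *v g = (r ** s) *v axis j 1" unfolding sj(2) by (simp add: matrix_vector_mul_assoc)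
      moreover have "r ** s \<in> R" using mul r SR sj(1) by blast
      ultimately have "r *v g \<in> M" using rax by simp
      then show "c g *s (r *v g) \<in> M" using osM c(2) g unfolding osub_def by (auto simp: val_ring_pv)
    qed
    finally show ?thesis .
  qed
  have axM: "axis j 1 \<in> M" for j :: 2 using rax[OF one, of j] by simp
  have ne: "axis 1 1 \<noteq> (axis 2 1 :: 'a^2)"
  proof
    assume "axis 1 1 = (axis 2 1 :: 'a^2)"
    then have "(axis 1 1 :: 'a^2) $ 1 = (axis 2 1 :: 'a^2) $ 1" by simp
    then show False by (simp add: axis_def)
  qed
  have latM: "lattice v M"
  proof -
    have "\<exists>S' c. finite S' \<and> S' \<subseteq> M \<and> x = (\<Sum>s\<in>S'. c s *s s)" for x :: "'a^2"
    proof -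
      let ?a1 = "axis 1 1 :: 'a^2" and ?a2 = "axis 2 1 :: 'a^2"
      let ?c = "\<lambda>s. if s = ?a1 then x$1 else x$2"
      have x: "x = x$1 *s ?a1 + x$2 *s ?a2" by (rule vec_decomp)
      have "(\<Sum>s\<in>{?a1, ?a2}. ?c s *s s) = x$1 *s ?a1 + x$2 *s ?a2" using ne by simp
      from x this[symmetric] have "x = (\<Sum>s\<in>{?a1, ?a2}. ?c s *s s)" by (rule trans)
      then show ?thesis using axM by (intro exI[of _ "{?a1, ?a2}"] exI[of _ ?c]) auto
    qed
    then show ?thesis unfolding lattice_def o_lattice_def M_def ospan_def using fG by blast
  qed
  have "R \<subseteq> End_lat M" using RM unfolding End_lat_def by blast
  moreover have "is_order v (End_lat M)" by (rule good_order[OF good_End[OF latM]])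
  ultimately have "End_lat M = R" using R unfolding maximal_order_def by blast
  then show ?thesis using latM by blast
qed

end

theorem lemma5p3:
  fixes v :: "'a::field \<Rightarrow> int"
    and \<iota> :: "'a^2^2 \<Rightarrow> 'a^2^2"
    and b :: "'a^2 \<Rightarrow> 'a^2 \<Rightarrow> 'a"
  assumes "nonarch_local_field v"
    and "(2::'a) \<noteq> 0"
    and "involution \<iota>"
    and "sym_nondeg_bilinear b"
    and "adjoint_form \<iota> b"
  shows "(\<forall>L c. lattice v L \<longrightarrow> c \<noteq> 0 \<longrightarrow>
            End_lat ((\<lambda>x. c *s x) ` L) \<inter> End_lat (dual_lattice v b ((\<lambda>x. c *s x) ` L))
            = End_lat L \<inter> End_lat (dual_lattice v b L))
       \<and> (\<forall>L. lattice v L \<longrightarrow> is_order v (End_lat L \<inter> End_lat (dual_lattice v b L)))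
       \<and> {End_lat L \<inter> End_lat (dual_lattice v b L) | L. lattice v L}
           = {R \<inter> \<iota> ` R | R. maximal_order v R}"
proof -
  have dv: "discrete_valuation v" using assms(1) unfolding nonarch_local_field_def by blast
  interpret dval v by (rule dval.intro[OF dv])
  have bf: "sym_nondeg_bilinear b" and adj: "adjoint_form \<iota> b" and inv: "involution \<iota>" using assms by auto
  have P1: "End_lat ((\<lambda>x. c *s x) ` L) \<inter> End_lat (dual_lattice v b ((\<lambda>x. c *s x) ` L))
            = End_lat L \<inter> End_lat (dual_lattice v b L)" if c: "c \<noteq> 0" for L c
  proof -
    have "inverse c \<noteq> 0" using c by simp
    then show ?thesis using End_scale[OF c, of L] End_scale[of "inverse c" "dual_lattice v b L"]
      dual_scale[OF bf c, of L] by simp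
  qed
  have P2: "is_order v (End_lat L \<inter> End_lat (dual_lattice v b L))" if L: "lattice v L" for L
    using good_order[OF good_Int[OF good_End[OF L] good_End]] lat_dual[OF bf L] by blast
  have P3: "{End_lat L \<inter> End_lat (dual_lattice v b L) | L. lattice v L}
           = {R \<inter> \<iota> ` R | R. maximal_order v R}"
  proof (intro equalityI subsetI)
    fix X assume "X \<in> {End_lat L \<inter> End_lat (dual_lattice v b L) | L. lattice v L}"
    then obtain L where L: "lattice v L" "X = End_lat L \<inter> End_lat (dual_lattice v b L)" by blast
    have "X = End_lat L \<inter> \<iota> ` End_lat L" using L iota_End[OF bf adj inv L(1)] by simp
    moreover have "maximal_order v (End_lat L)" by (rule End_max[OF L(1)])
    ultimately show "X \<in> {R \<inter> \<iota> ` R | R. maximal_order v R}" by blast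
  next
    fix X assume "X \<in> {R \<inter> \<iota> ` R | R. maximal_order v R}"
    then obtain R where R: "maximal_order v R" "X = R \<inter> \<iota> ` R" by blast
    obtain M where M: "lattice v M" "R = End_lat M" using max_End[OF R(1)] by blast
    have "X = End_lat M \<inter> End_lat (dual_lattice v b M)" using R(2) M iota_End[OF bf adj inv M(1)] by simp
    then show "X \<in> {End_lat L \<inter> End_lat (dual_lattice v b L) | L. lattice v L}" using M(1) by blast
  qed
  show ?thesis using P1 P2 P3 by blast
qed

end
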